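(* In the adaptive clinching auction for one infinitely divisible good (described in the context), the allocations in the stopping step (I) can be carried out in such a way that, when the auction stops, there is at most one bidder $i$ with final allocation $X_i>0$ and total payment $P_i<B_i$.
   Context: One unit of an infinitely divisible good is sold to $n$ bidders; bidder $i$ reports valuation $v_i$ per unit and budget $B_i>0$; $X_i$ and $P_i$ denote the final allocation and total payment of bidder $i$. The adaptive clinching auction is a process indexed by time $t\ge0$, with price $p(t)$, effective budgets $b_i(t)$, allocations $x_i(t)$, payments $P_i(t)$, and supply $S(t)=1-\sum_ix_i(t)$; initially $p(0)=0$, $x_i(0)=P_i(0)=0$, $b_i(0)=B_i$, $S(0)=1$. Demand $D_i(t)=b_i(t)/p(t)$ and $D_{-i}(t)=\sum_{j\ne i}D_j(t)$. Active set $A(t)=\{j:v_j>p(t),b_j(t)>0\}$, exiting set $E(t)=\{j:v_j=p(t),b_j(t)>0\}$, clinching set $C(t)=\{j\in A(t):S(t)=D_{-j}(t)\}$. With a fixed report-independent ordering of the bidders, the rules (primes are time derivatives; unmentioned quantities are constant) are: (I) if $\sum_{i\in A(t)}D_i(t)\le S(t)$, stop at time $f=t$ and, at unit price $p(t)$ respecting budgets, give each $i\in A(t)$ amount $D_i(t)$ and give the remaining amount $S(t)-\sum_{i\in A(t)}D_i(t)$ to bidders in $E(t)$ (how this remainder is split among $E(t)$ is not otherwise specified); (II) else if $E(t)=\emptyset\ne A(t)$: $p'=1$, and for $i\in C(t)$: $b_i'=-S(t)$, $P_i'=S(t)$, $x_i'=S(t)/p(t)$; (III) else if $E(t)\ne\emptyset\ne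 A(t)$: $p'=0$; for the smallest-index $j\in E(t)$: $b_j'=-1$, $P_j'=x_j'=0$; for $i\in C(t)$: $b_i'=-1$, $P_i'=1$, $x_i'=1/p(t)$. *)

theory Defs
  imports Complex_Main "HOL-Library.Extended_Real"
begin

text \<open>Bidders are 0,...,n-1; the fixed report-independent ordering is the natural
order on indices. p is the price, b i the effective budget, x i the allocation,
P i the payment of bidder i, all as functions of time.\<close>

definition demand :: "real \<Rightarrow> real \<Rightarrow> ereal" where
  "demand bb pp = (if pp = 0 then (if bb > 0 then \<infinity> else 0) else ereal (bb / pp))"

definition remaining_supply :: "nat \<Rightarrow> (nat \<Rightarrow> real \<Rightarrow> real) \<Rightarrow> real \<Rightarrow> real" where
  "remaining_supply n x t = 1 - (\<Sum>i<n. x i t)"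

definition active_set :: "nat \<Rightarrow> (nat \<Rightarrow> real) \<Rightarrow> (real \<Rightarrow> real) \<Rightarrow> (nat \<Rightarrow> real \<Rightarrow> real) \<Rightarrow> real \<Rightarrow> nat set" where
  "active_set n v p b t = {j. j < n \<and> v j > p t \<and> b j t > 0}"

definition exiting_set :: "nat \<Rightarrow> (nat \<Rightarrow> real) \<Rightarrow> (real \<Rightarrow> real) \<Rightarrow> (nat \<Rightarrow> real \<Rightarrow> real) \<Rightarrow> real \<Rightarrow> nat set" where
  "exiting_set n v p b t = {j. j < n \<and> v j = p t \<and> b j t > 0}"

definition clinching_set :: "nat \<Rightarrow> (nat \<Rightarrow> real) \<Rightarrow> (real \<Rightarrow> real) \<Rightarrow> (nat \<Rightarrow> real \<Rightarrow> real) \<Rightarrow> (nat \<Rightarrow> real \<Rightarrow> real) \<Rightarrow> real \<Rightarrow> nat set" where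
  "clinching_set n v p b x t =
     {j \<in> active_set n v p b t.
        ereal (remaining_supply n x t) = (\<Sum>k\<in>{..<n} - {j}. demand (b k t) (p t))}"

definition stop_cond :: "nat \<Rightarrow> (nat \<Rightarrow> real) \<Rightarrow> (real \<Rightarrow> real) \<Rightarrow> (nat \<Rightarrow> real \<Rightarrow> real) \<Rightarrow> (nat \<Rightarrow> real \<Rightarrow> real) \<Rightarrow> real \<Rightarrow> bool" where
  "stop_cond n v p b x t \<longleftrightarrow>
     (\<Sum>i\<in>active_set n v p b t. demand (b i t) (p t)) \<le> ereal (remaining_supply n x t)"

text \<open>The adaptive clinching auction run on the time interval [0,f], stopping at time f.
Time derivatives are right derivatives (the rules may switch at isolated times);
all trajectories are continuous.\<close>
definition clinching_run ::
  "nat \<Rightarrow> (nat \<Rightarrow> real) \<Rightarrow> (nat \<Rightarrow> real) \<Rightarrow> (real \<Rightarrow> real) \<Rightarrow> (nat \<Rightarrow> real \<Rightarrow> real)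
    \<Rightarrow> (nat \<Rightarrow> real \<Rightarrow> real) \<Rightarrow> (nat \<Rightarrow> real \<Rightarrow> real) \<Rightarrow> real \<Rightarrow> bool" where
  "clinching_run n v B p b x P f \<longleftrightarrow>
     0 \<le> f \<and>
     p 0 = 0 \<and> (\<forall>i<n. x i 0 = 0 \<and> P i 0 = 0 \<and> b i 0 = B i) \<and>
     continuous_on {0..f} p \<and>
     (\<forall>i<n. continuous_on {0..f} (b i) \<and> continuous_on {0..f} (x i) \<and> continuous_on {0..f} (P i)) \<and>
     (\<forall>t. 0 \<le> t \<and> t < f \<longrightarrow> \<not> stop_cond n v p b x t) \<and>
     stop_cond n v p b x f \<and>
     (\<forall>t. 0 \<le> t \<and> t < f \<longrightarrow>
        exiting_set n v p b t = {} \<and> active_set n v p b t \<noteq> {} \<longrightarrow>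
          (p has_real_derivative 1) (at_right t) \<and>
          (\<forall>i<n. if i \<in> clinching_set n v p b x t then
                    (b i has_real_derivative - remaining_supply n x t) (at_right t) \<and>
                    (P i has_real_derivative remaining_supply n x t) (at_right t) \<and>
                    (x i has_real_derivative remaining_supply n x t / p t) (at_right t)
                  else
                    (b i has_real_derivative 0) (at_right t) \<and>
                    (P i has_real_derivative 0) (at_right t) \<and>
                    (x i has_real_derivative 0) (at_right t))) \<and>
     (\<forall>t. 0 \<le> t \<and> t < f \<longrightarrow>
        exiting_set n v p b t \<noteq> {} \<and> active_set n v p b t \<noteq> {} \<longrightarrow>
          (p has_real_derivative 0) (at_right t) \<and>
          (\<forall>i<n. if i = Min (exiting_set n v p b t) then
                    (b i has_real_derivative - 1) (at_right t) \<and>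
                    (P i has_real_derivative 0) (at_right t) \<and>
                    (x i has_real_derivative 0) (at_right t)
                  else if i \<in> clinching_set n v p b x t then
                    (b i has_real_derivative - 1) (at_right t) \<and>
                    (P i has_real_derivative 1) (at_right t) \<and>
                    (x i has_real_derivative 1 / p t) (at_right t)
                  else
                    (b i has_real_derivative 0) (at_right t) \<and>
                    (P i has_real_derivative 0) (at_right t) \<and>
                    (x i has_real_derivative 0) (at_right t)))"

text \<open>Final allocation / payment when the split of the remainder among exiting
bidders is given by r (r j is the amount given to bidder j in E(f)).\<close>
definition final_alloc ::
  "nat \<Rightarrow> (nat \<Rightarrow> real) \<Rightarrow> (real \<Rightarrow> real) \<Rightarrow> (nat \<Rightarrow> real \<Rightarrow> real) \<Rightarrow> (nat \<Rightarrow> real \<Rightarrow> real)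
    \<Rightarrow> real \<Rightarrow> (nat \<Rightarrow> real) \<Rightarrow> nat \<Rightarrow> real" where
  "final_alloc n v p b x f r i =
     x i f + (if i \<in> active_set n v p b f then b i f / p f else r i)"

definition final_pay ::
  "nat \<Rightarrow> (nat \<Rightarrow> real) \<Rightarrow> (real \<Rightarrow> real) \<Rightarrow> (nat \<Rightarrow> real \<Rightarrow> real) \<Rightarrow> (nat \<Rightarrow> real \<Rightarrow> real)
    \<Rightarrow> real \<Rightarrow> (nat \<Rightarrow> real) \<Rightarrow> nat \<Rightarrow> real" where
  "final_pay n v p b P f r i =
     P i f + p f * (if i \<in> active_set n v p b f then b i f / p f else r i)"

end

theory Submission
  imports Defs "HOL-Analysis.Analysis"
begin


lemma last_point:
  fixes a b :: real
  assumes "a \<le> b" "closed {t\<in>{a..b}. Q t}" "Q a"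
  shows "\<exists>s. a \<le> s \<and> s \<le> b \<and> Q s \<and> (\<forall>u. s < u \<and> u \<le> b \<longrightarrow> \<not> Q u)"
proof -
  let ?K = "{t\<in>{a..b}. Q t}"
  have ne: "?K \<noteq> {}" using assms by auto
  have bd: "bdd_above ?K" by (rule bdd_aboveI[of _ b]) auto
  have "Sup ?K \<in> ?K" using closed_contains_Sup[OF ne bd assms(2)] .
  moreover have "\<forall>u. Sup ?K < u \<and> u \<le> b \<longrightarrow> \<not> Q u"
  proof (intro allI impI)
    fix u assume u: "Sup ?K < u \<and> u \<le> b"
    show "\<not> Q u"
    proof
      assume "Q u"
      then have "u \<in> ?K" using u \<open>Sup ?K \<in> ?K\<close> by auto
      then have "u \<le> Sup ?K" using bd by (rule cSup_upper)
      then show False using u by simp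
    qed
  qed
  ultimately show ?thesis by (intro exI[of _ "Sup ?K"]) auto
qed

lemma ev_right_ex:
  assumes "eventually P (at_right (x::real))" shows "\<exists>y. P y"
proof -
  obtain b where "b > x" "\<forall>y>x. y < b \<longrightarrow> P y" using assms eventually_at_right_field by blast
  then have "P ((x+b)/2)" by auto
  then show ?thesis ..
qed

lemma ev_left_ex:
  assumes "eventually P (at_left (x::real))" shows "\<exists>y. P y"
proof -
  obtain b where "b < x" "\<forall>y>b. y < x \<longrightarrow> P y" using assms eventually_at_left_field by blast
  then have "P ((x+b)/2)" by auto
  then show ?thesis ..
qed

lemma ml_strict:
  fixes g :: "real \<Rightarrow> real"
  assumes ab: "a \<le> b" and cont: "continuous_on {a..b} g"
    and der: "\<And>t. a < t \<Longrightarrow> t < b \<Longrightarrow> \<exists>d>0. (g has_real_derivative d) (at_right t)"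
  shows "g a \<le> g b"
proof (rule ccontr)
  assume "\<not> g a \<le> g b"
  then have lt: "g b < g a" by simp
  define y where "y = (g a + g b) / 2"
  have ya: "y < g a" and yb: "g b < y" using lt by (auto simp: y_def)
  have ab': "a < b" using ab lt by (cases "a = b") auto
  have cl: "closed {t\<in>{a..b}. y \<le> g t}"
  proof -
    have "{t\<in>{a..b}. y \<le> g t} = {a..b} \<inter> g -` {y..}" by auto
    then show ?thesis using continuous_closed_preimage[OF cont] by auto
  qed
  obtain s where s: "a \<le> s" "s \<le> b" "y \<le> g s" and after: "\<And>u. s < u \<Longrightarrow> u \<le> b \<Longrightarrow> \<not> y \<le> g u"
    using last_point[OF ab cl] ya by auto
  have sb: "s < b" using s yb by (cases "s = b") auto
  have "s > a"
  proof (rule ccontr)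
    assume "\<not> s > a" then have sa: "s = a" using s by simp
    have "(g \<longlongrightarrow> g a) (at a within {a..b})"
      using cont ab by (simp add: continuous_on_def)
    then have "(g \<longlongrightarrow> g a) (at_right a)" using ab' by (simp add: at_within_Icc_at_right)
    then have "eventually (\<lambda>t. y < g t) (at_right a)" using ya by (rule order_tendstoD)
    moreover have "eventually (\<lambda>t. t < b) (at_right a)" using ab' eventually_at_right_field by blast
    ultimately have "eventually (\<lambda>t. y < g t \<and> t < b \<and> a < t) (at_right a)"
      by (auto elim: eventually_elim2 simp: eventually_conj_iff eventually_at_right_less)
    then obtain t where "y < g t" "t < b" "a < t"
      using ev_right_ex by blast
    then show False using after[of t] sa by auto
  qed
  then obtain d where d: "d > 0" "(g has_real_derivative d) (at_right s)" using der sb by blast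
  then have "((\<lambda>u. (g u - g s) / (u - s)) \<longlongrightarrow> d) (at_right s)"
    by (simp add: has_field_derivative_iff)
  then have "eventually (\<lambda>u. 0 < (g u - g s) / (u - s)) (at_right s)" using d(1) by (rule order_tendstoD)
  moreover have "eventually (\<lambda>u. u < b) (at_right s)" using sb eventually_at_right_field by blast
  ultimately have "eventually (\<lambda>u. 0 < (g u - g s) / (u - s) \<and> u < b \<and> s < u) (at_right s)"
    by (auto elim: eventually_elim2 simp: eventually_conj_iff eventually_at_right_less)
  then obtain u where u: "0 < (g u - g s) / (u - s)" "u < b" "s < u"
    using ev_right_ex by blast
  then have "g u > g s" by (simp add: zero_less_divide_iff)
  then show False using after[of u] u s by auto
qed

lemma ml:
  fixes g :: "real \<Rightarrow> real"
  assumes ab: "a \<le> b" and cont: "continuous_on {a..b} g"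
    and der: "\<And>t. a < t \<Longrightarrow> t < b \<Longrightarrow> \<exists>d\<ge>0. (g has_real_derivative d) (at_right t)"
  shows "g a \<le> g b"
proof (rule field_le_epsilon)
  fix e :: real assume e: "0 < e"
  define k where "k = e / (b - a + 1)"
  have k: "k > 0" using e ab by (simp add: k_def)
  have "(\<lambda>t. g t + k * t) a \<le> (\<lambda>t. g t + k * t) b"
  proof (rule ml_strict[OF ab])
    show "continuous_on {a..b} (\<lambda>t. g t + k * t)" using cont by (intro continuous_intros) auto
    fix t assume "a < t" "t < b"
    then obtain d where "d \<ge> 0" "(g has_real_derivative d) (at_right t)" using der by blast
    then have "((\<lambda>t. g t + k * t) has_real_derivative d + k * 1) (at_right t)"
      by (intro derivative_intros) auto
    then show "\<exists>d>0. ((\<lambda>t. g t + k * t) has_real_derivative d) (at_right t)"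
      using \<open>d \<ge> 0\<close> k by (intro exI[of _ "d + k"]) auto
  qed
  then have "g a \<le> g b + k * (b - a)" by (simp add: algebra_simps)
  moreover have "k * (b - a) \<le> e"
  proof -
    have "k * (b - a) = e * ((b - a) / (b - a + 1))" by (simp add: k_def)
    also have "\<dots> \<le> e * 1" using e ab by (intro mult_left_mono) auto
    finally show ?thesis by simp
  qed
  ultimately show "g a \<le> g b + e" by simp
qed

lemma ml_neg:
  fixes g :: "real \<Rightarrow> real"
  assumes ab: "a \<le> b" and cont: "continuous_on {a..b} g"
    and der: "\<And>t. a < t \<Longrightarrow> t < b \<Longrightarrow> \<exists>d\<le>0. (g has_real_derivative d) (at_right t)"
  shows "g b \<le> g a"
proof -
  have "(\<lambda>t. - g t) a \<le> (\<lambda>t. - g t) b"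
  proof (rule ml[OF ab])
    show "continuous_on {a..b} (\<lambda>t. - g t)" using cont by (intro continuous_intros)
    fix t assume "a < t" "t < b"
    then obtain d where "d \<le> 0" "(g has_real_derivative d) (at_right t)" using der by blast
    then have "((\<lambda>t. - g t) has_real_derivative - d) (at_right t)"
      by (intro derivative_intros) auto
    then show "\<exists>d\<ge>0. ((\<lambda>t. - g t) has_real_derivative d) (at_right t)"
      using \<open>d \<le> 0\<close> by (intro exI[of _ "- d"]) auto
  qed
  then show ?thesis by simp
qed

lemma ml_const:
  fixes g :: "real \<Rightarrow> real"
  assumes ab: "a \<le> b" and cont: "continuous_on {a..b} g"
    and der: "\<And>t. a < t \<Longrightarrow> t < b \<Longrightarrow> (g has_real_derivative 0) (at_right t)"
  shows "g b = g a"
  using ml[OF ab cont] ml_neg[OF ab cont] der by (metis order.refl antisym)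

lemma barrier:
  fixes g :: "real \<Rightarrow> real"
  assumes ab: "a \<le> b" and cont: "continuous_on {a..b} g" and ga: "0 \<le> g a"
    and der: "\<And>t. a < t \<Longrightarrow> t < b \<Longrightarrow> g t < 0 \<Longrightarrow> \<exists>d\<ge>0. (g has_real_derivative d) (at_right t)"
  shows "0 \<le> g b"
proof -
  have cl: "closed {t\<in>{a..b}. 0 \<le> g t}"
  proof -
    have "{t\<in>{a..b}. 0 \<le> g t} = {a..b} \<inter> g -` {0..}" by auto
    then show ?thesis using continuous_closed_preimage[OF cont] by auto
  qed
  obtain s where s: "a \<le> s" "s \<le> b" "0 \<le> g s" and after: "\<And>u. s < u \<Longrightarrow> u \<le> b \<Longrightarrow> \<not> 0 \<le> g u"
    using last_point[OF ab cl] ga by auto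
  show ?thesis
  proof (cases "s = b")
    case True then show ?thesis using s by simp
  next
    case False
    then have sb: "s < b" using s by simp
    have "g s \<le> g b"
    proof (rule ml[of s b g])
      show "s \<le> b" using sb by simp
      show "continuous_on {s..b} g" using continuous_on_subset[OF cont] s by auto
      fix t assume "s < t" "t < b"
      then show "\<exists>d\<ge>0. (g has_real_derivative d) (at_right t)" using der[of t] after[of t] s by auto
    qed
    then show ?thesis using s by simp
  qed
qed

lemma greedy0:
  fixes c :: "nat \<Rightarrow> real"
  assumes "finite E" "\<And>j. j \<in> E \<Longrightarrow> 0 \<le> c j" "0 \<le> R" "R \<le> sum c E"
  shows "\<exists>r. (\<forall>j. 0 \<le> r j) \<and> (\<forall>j. j \<notin> E \<longrightarrow> r j = 0) \<and> (\<forall>j\<in>E. r j \<le> c j) \<and> sum r E = R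
           \<and> (\<forall>j\<in>E. \<forall>k\<in>E. 0 < r j \<and> r j < c j \<and> 0 < r k \<and> r k < c k \<longrightarrow> j = k)"
  using assms
proof (induction E arbitrary: R rule: finite_induct)
  case empty
  then show ?case by (intro exI[of _ "\<lambda>_. 0"]) auto
next
  case (insert a F)
  show ?case
  proof (cases "R \<le> sum c F")
    case True
    then obtain r where r: "(\<forall>j. 0 \<le> r j) \<and> (\<forall>j. j \<notin> F \<longrightarrow> r j = 0) \<and> (\<forall>j\<in>F. r j \<le> c j) \<and> sum r F = R
           \<and> (\<forall>j\<in>F. \<forall>k\<in>F. 0 < r j \<and> r j < c j \<and> 0 < r k \<and> r k < c k \<longrightarrow> j = k)"
      using insert by auto
    have ra: "r a = 0" using r insert by auto
    show ?thesis using r ra insert by (intro exI[of _ r]) auto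
  next
    case False
    define r where "r j = (if j \<in> F then c j else if j = a then R - sum c F else 0)" for j
    have "sum r F = sum c F" by (rule sum.cong) (auto simp: r_def)
    moreover have "0 \<le> sum c F" using insert by (intro sum_nonneg) auto
    ultimately show ?thesis using False insert
      by (intro exI[of _ r]) (auto simp: r_def)
  qed
qed



lemma demand_nonneg: "0 \<le> bb \<Longrightarrow> 0 \<le> pp \<Longrightarrow> 0 \<le> demand bb pp"
  by (auto simp: demand_def)

lemma demand_pos: "0 < pp \<Longrightarrow> demand bb pp = ereal (bb / pp)"
  by (auto simp: demand_def)

locale crun =
  fixes n :: nat and v B :: "nat \<Rightarrow> real" and p :: "real \<Rightarrow> real"
    and b x P :: "nat \<Rightarrow> real \<Rightarrow> real" and f c :: real
  assumes vnn: "\<And>i. i < n \<Longrightarrow> v i \<ge> 0"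
    and Bpos: "\<And>i. i < n \<Longrightarrow> B i > 0"
    and run: "clinching_run n v B p b x P f"
    and cf: "c \<le> f" and c0: "0 \<le> c"
    and Ane: "\<And>t. 0 \<le> t \<Longrightarrow> t < c \<Longrightarrow> active_set n v p b t \<noteq> {}"
begin

abbreviation "S t \<equiv> remaining_supply n x t"
abbreviation "A t \<equiv> active_set n v p b t"
abbreviation "E t \<equiv> exiting_set n v p b t"
abbreviation "C t \<equiv> clinching_set n v p b x t"

lemma p0: "p 0 = 0" and init: "\<And>i. i < n \<Longrightarrow> x i 0 = 0 \<and> P i 0 = 0 \<and> b i 0 = B i"
  and contp: "continuous_on {0..f} p"
  and contall: "\<And>i. i < n \<Longrightarrow> continuous_on {0..f} (b i) \<and> continuous_on {0..f} (x i) \<and> continuous_on {0..f} (P i)"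
  and nostop: "\<And>t. 0 \<le> t \<Longrightarrow> t < f \<Longrightarrow> \<not> stop_cond n v p b x t"
  and stopf: "stop_cond n v p b x f"
  and f0: "0 \<le> f"
  using run unfolding clinching_run_def by auto

lemma ruleII: "0 \<le> t \<Longrightarrow> t < f \<Longrightarrow> E t = {} \<Longrightarrow> A t \<noteq> {} \<Longrightarrow>
          (p has_real_derivative 1) (at_right t) \<and>
          (\<forall>i<n. if i \<in> C t then
                    (b i has_real_derivative - S t) (at_right t) \<and>
                    (P i has_real_derivative S t) (at_right t) \<and>
                    (x i has_real_derivative S t / p t) (at_right t)
                  else
                    (b i has_real_derivative 0) (at_right t) \<and>
                    (P i has_real_derivative 0) (at_right t) \<and>
                    (x i has_real_derivative 0) (at_right t))"
  using run unfolding clinching_run_def by blast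

lemma ruleIII: "0 \<le> t \<Longrightarrow> t < f \<Longrightarrow> E t \<noteq> {} \<Longrightarrow> A t \<noteq> {} \<Longrightarrow>
          (p has_real_derivative 0) (at_right t) \<and>
          (\<forall>i<n. if i = Min (E t) then
                    (b i has_real_derivative - 1) (at_right t) \<and>
                    (P i has_real_derivative 0) (at_right t) \<and>
                    (x i has_real_derivative 0) (at_right t)
                  else if i \<in> C t then
                    (b i has_real_derivative - 1) (at_right t) \<and>
                    (P i has_real_derivative 1) (at_right t) \<and>
                    (x i has_real_derivative 1 / p t) (at_right t)
                  else
                    (b i has_real_derivative 0) (at_right t) \<and>
                    (P i has_real_derivative 0) (at_right t) \<and>
                    (x i has_real_derivative 0) (at_right t))"
  using run unfolding clinching_run_def by blast

definition "pd t = (if E t = {} then 1 else (0::real))"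
definition "bd i t = (if E t = {} then (if i \<in> C t then - S t else 0)
   else if i = Min (E t) then -1 else if i \<in> C t then -1 else 0)"
definition "Pd i t = (if E t = {} then (if i \<in> C t then S t else 0)
   else if i = Min (E t) then 0 else if i \<in> C t then 1 else 0)"
definition "xd i t = (if E t = {} then (if i \<in> C t then S t / p t else 0)
   else if i = Min (E t) then 0 else if i \<in> C t then 1 / p t else 0)"

lemma tf: "t < c \<Longrightarrow> t < f" using cf by simp

lemma d_p: "0 \<le> t \<Longrightarrow> t < c \<Longrightarrow> (p has_real_derivative pd t) (at_right t)"
  using ruleII[of t] ruleIII[of t] Ane[of t] tf[of t] by (cases "E t = {}") (auto simp: pd_def)

lemma d_b: "0 \<le> t \<Longrightarrow> t < c \<Longrightarrow> i < n \<Longrightarrow> (b i has_real_derivative bd i t) (at_right t)"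
proof (cases "E t = {}")
  case True
  assume "0 \<le> t" "t < c" "i < n"
  then show ?thesis using True ruleII[of t] Ane[of t] tf[of t]
    by (cases "i \<in> C t") (auto simp: bd_def)
next
  case False
  assume "0 \<le> t" "t < c" "i < n"
  then show ?thesis using False ruleIII[of t] Ane[of t] tf[of t]
    by (cases "i = Min (E t)"; cases "i \<in> C t") (auto simp: bd_def)
qed

lemma d_P: "0 \<le> t \<Longrightarrow> t < c \<Longrightarrow> i < n \<Longrightarrow> (P i has_real_derivative Pd i t) (at_right t)"
proof (cases "E t = {}")
  case True
  assume "0 \<le> t" "t < c" "i < n"
  then show ?thesis using True ruleII[of t] Ane[of t] tf[of t]
    by (cases "i \<in> C t") (auto simp: Pd_def)
next
  case False
  assume "0 \<le> t" "t < c" "i < n"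
  then show ?thesis using False ruleIII[of t] Ane[of t] tf[of t]
    by (cases "i = Min (E t)"; cases "i \<in> C t") (auto simp: Pd_def)
qed

lemma d_x: "0 \<le> t \<Longrightarrow> t < c \<Longrightarrow> i < n \<Longrightarrow> (x i has_real_derivative xd i t) (at_right t)"
proof (cases "E t = {}")
  case True
  assume "0 \<le> t" "t < c" "i < n"
  then show ?thesis using True ruleII[of t] Ane[of t] tf[of t]
    by (cases "i \<in> C t") (auto simp: xd_def)
next
  case False
  assume "0 \<le> t" "t < c" "i < n"
  then show ?thesis using False ruleIII[of t] Ane[of t] tf[of t]
    by (cases "i = Min (E t)"; cases "i \<in> C t") (auto simp: xd_def)
qed

lemma d_S: assumes "0 \<le> t" "t < c" shows "((\<lambda>t. S t) has_real_derivative - (\<Sum>k<n. xd k t)) (at_right t)"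
proof -
  have "\<And>k. k \<in> {..<n} \<Longrightarrow> (x k has_real_derivative xd k t) (at_right t)" using d_x assms by auto
  then show ?thesis unfolding remaining_supply_def by (auto intro!: derivative_eq_intros)
qed

lemma E_fin: "finite (E t)" unfolding exiting_set_def by auto
lemma Min_E: "E t \<noteq> {} \<Longrightarrow> Min (E t) \<in> E t" using E_fin by (rule Min_in)
lemma C_A: "C t \<subseteq> A t" unfolding clinching_set_def by auto

lemma bd_nz: "i < n \<Longrightarrow> bd i t \<noteq> 0 \<Longrightarrow> b i t > 0"
  using Min_E[of t] C_A[of t] unfolding bd_def
  by (auto simp: active_set_def exiting_set_def split: if_splits)

lemma xd_nz: "xd i t \<noteq> 0 \<Longrightarrow> i \<in> C t"
  unfolding xd_def by (auto split: if_splits)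

definition "e i t = B i - P i t - b i t"

lemma d_e: assumes "0 \<le> t" "t < c" "i < n" shows "(e i has_real_derivative - (Pd i t + bd i t)) (at_right t)"
  unfolding e_def using d_P[OF assms] d_b[OF assms] by (auto intro!: derivative_eq_intros)

lemma ed_cases: "- (Pd i t + bd i t) = (if E t \<noteq> {} \<and> i = Min (E t) then 1 else 0)"
  unfolding Pd_def bd_def by auto

lemma cont_p: "0 \<le> u \<Longrightarrow> w \<le> c \<Longrightarrow> continuous_on {u..w} p"
  using contp cf by (meson atLeastatMost_subset_iff continuous_on_subset order.trans order_refl)
lemma cont_b: "i < n \<Longrightarrow> 0 \<le> u \<Longrightarrow> w \<le> c \<Longrightarrow> continuous_on {u..w} (b i)"
  using contall[of i] cf by (meson atLeastatMost_subset_iff continuous_on_subset order.trans order_refl)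
lemma cont_x: "i < n \<Longrightarrow> 0 \<le> u \<Longrightarrow> w \<le> c \<Longrightarrow> continuous_on {u..w} (x i)"
  using contall[of i] cf by (meson atLeastatMost_subset_iff continuous_on_subset order.trans order_refl)
lemma cont_P: "i < n \<Longrightarrow> 0 \<le> u \<Longrightarrow> w \<le> c \<Longrightarrow> continuous_on {u..w} (P i)"
  using contall[of i] cf by (meson atLeastatMost_subset_iff continuous_on_subset order.trans order_refl)
lemma cont_S: "0 \<le> u \<Longrightarrow> w \<le> c \<Longrightarrow> continuous_on {u..w} (\<lambda>t. S t)"
  unfolding remaining_supply_def by (intro continuous_intros cont_x) auto
lemma cont_e: "i < n \<Longrightarrow> 0 \<le> u \<Longrightarrow> w \<le> c \<Longrightarrow> continuous_on {u..w} (e i)"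
  unfolding e_def by (intro continuous_intros cont_P cont_b) auto

lemma p_mono: "0 \<le> u \<Longrightarrow> u \<le> w \<Longrightarrow> w \<le> c \<Longrightarrow> p u \<le> p w"
  by (rule ml[OF _ cont_p]) (auto intro!: exI[of _ "pd _"] d_p simp: pd_def)

lemma p_nn: "0 \<le> t \<Longrightarrow> t \<le> c \<Longrightarrow> 0 \<le> p t"
  using p_mono[of 0 t] p0 by auto

lemma e_mono: "i < n \<Longrightarrow> 0 \<le> u \<Longrightarrow> u \<le> w \<Longrightarrow> w \<le> c \<Longrightarrow> e i u \<le> e i w"
proof (rule ml[OF _ cont_e])
  fix t assume "i < n" "0 \<le> u" "w \<le> c" "u < t" "t < w"
  then have "(e i has_real_derivative - (Pd i t + bd i t)) (at_right t)" by (intro d_e) auto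
  moreover have "- (Pd i t + bd i t) \<ge> 0" using ed_cases[of i t] by auto
  ultimately show "\<exists>d\<ge>0. (e i has_real_derivative d) (at_right t)" by blast
qed auto

lemma e_nn: "i < n \<Longrightarrow> 0 \<le> t \<Longrightarrow> t \<le> c \<Longrightarrow> 0 \<le> e i t"
  using e_mono[of i 0 t] init[of i] by (auto simp: e_def)

lemma b_nn: assumes "i < n" "0 \<le> t" "t \<le> c" shows "0 \<le> b i t"
proof -
  have "0 \<le> b i t"
  proof (rule barrier[of 0 t "b i"])
    show "continuous_on {0..t} (b i)" using assms by (intro cont_b) auto
    show "0 \<le> b i 0" using init[of i] Bpos[of i] assms by auto
    fix u assume u: "0 < u" "u < t" "b i u < 0"
    then have "bd i u = 0" using bd_nz[of i u] assms by force
    moreover have "(b i has_real_derivative bd i u) (at_right u)" using u assms by (intro d_b) auto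
    ultimately show "\<exists>d\<ge>0. (b i has_real_derivative d) (at_right u)" by auto
  qed (use assms in auto)
  then show ?thesis .
qed

lemma S_nn: assumes "0 \<le> t" "t \<le> c" shows "0 \<le> S t"
proof (rule barrier[of 0 t "\<lambda>t. S t"])
  show "continuous_on {0..t} (\<lambda>t. S t)" using assms by (intro cont_S) auto
  show "0 \<le> S 0" using init by (simp add: remaining_supply_def)
  fix u assume u: "0 < u" "u < t" "S u < 0"
  have "xd k u = 0" if k: "k < n" for k
  proof (rule ccontr)
    assume "xd k u \<noteq> 0"
    then have "k \<in> C u" by (rule xd_nz)
    then have eq: "ereal (S u) = (\<Sum>j\<in>{..<n} - {k}. demand (b j u) (p u))"
      unfolding clinching_set_def by auto
    have "0 \<le> (\<Sum>j\<in>{..<n} - {k}. demand (b j u) (p u))"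
      using u assms by (intro sum_nonneg demand_nonneg b_nn p_nn) auto
    then have "0 \<le> ereal (S u)" using eq by simp
    then show False using u by simp
  qed
  then have "(\<Sum>k<n. xd k u) = 0" by simp
  then show "\<exists>d\<ge>0. ((\<lambda>t. S t) has_real_derivative d) (at_right u)"
    using d_S[of u] u assms by (intro exI[of _ 0]) auto
qed (use assms in auto)

lemma xd_nn: "0 \<le> t \<Longrightarrow> t \<le> c \<Longrightarrow> 0 \<le> xd i t"
  using S_nn[of t] p_nn[of t] unfolding xd_def by auto

lemma bd_np: "0 \<le> t \<Longrightarrow> t \<le> c \<Longrightarrow> bd i t \<le> 0"
  using S_nn[of t] unfolding bd_def by auto

lemma x_mono: assumes "i < n" "0 \<le> u" "u \<le> w" "w \<le> c" shows "x i u \<le> x i w"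
proof (rule ml[OF _ cont_x])
  fix t assume t: "u < t" "t < w"
  then show "\<exists>d\<ge>0. (x i has_real_derivative d) (at_right t)"
    using assms by (intro exI[of _ "xd i t"]) (auto intro!: d_x xd_nn)
qed (use assms in auto)

lemma x_nn: "i < n \<Longrightarrow> 0 \<le> t \<Longrightarrow> t \<le> c \<Longrightarrow> 0 \<le> x i t"
  using x_mono[of i 0 t] init[of i] by auto

lemma b_mono: assumes "i < n" "0 \<le> u" "u \<le> w" "w \<le> c" shows "b i w \<le> b i u"
proof (rule ml_neg[OF _ cont_b])
  fix t assume t: "u < t" "t < w"
  then show "\<exists>d\<le>0. (b i has_real_derivative d) (at_right t)"
    using assms by (intro exI[of _ "bd i t"]) (auto intro!: d_b bd_np)
qed (use assms in auto)

lemma x_pos_p: assumes "i < n" "0 \<le> t" "t \<le> c" "x i t > 0" shows "p t > 0"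
proof (rule ccontr)
  assume "\<not> p t > 0"
  then have pz: "p u = 0" if "0 \<le> u" "u \<le> t" for u
    using p_mono[of u t] p_nn[of u] that assms by force
  have "x i t = x i 0"
  proof (rule ml_const[OF _ cont_x])
    fix u assume u: "0 < u" "u < t"
    have "xd i u = 0" using pz[of u] u unfolding xd_def by auto
    then show "(x i has_real_derivative 0) (at_right u)" using d_x[of u i] u assms by auto
  qed (use assms in auto)
  then show False using init[of i] assms by auto
qed

lemma e_v: assumes "i < n" "0 \<le> t" "t \<le> c" "e i t > 0" shows "v i \<le> p t"
proof (rule ccontr)
  assume "\<not> v i \<le> p t"
  then have vt: "p t < v i" by simp
  have "e i t = e i 0"
  proof (rule ml_const[OF _ cont_e])
    fix u assume u: "0 < u" "u < t"
    have "p u \<le> p t" using u assms by (intro p_mono) auto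
    then have "i \<notin> E u" using vt by (auto simp: exiting_set_def)
    then have "\<not> (E u \<noteq> {} \<and> i = Min (E u))" using Min_E[of u] by auto
    then have "- (Pd i u + bd i u) = 0" using ed_cases[of i u] by simp
    then show "(e i has_real_derivative 0) (at_right u)" using d_e[of u i] u assms by auto
  qed (use assms in auto)
  then show False using init[of i] assms by (auto simp: e_def)
qed

definition "G i t = (\<Sum>k\<in>{..<n} - {i}. b k t) - p t * S t"
definition "Gd i t = (\<Sum>k\<in>{..<n} - {i}. bd k t) - (pd t * S t + (- (\<Sum>k<n. xd k t)) * p t)"

lemma d_G: assumes "0 \<le> t" "t < c" shows "(G i has_real_derivative Gd i t) (at_right t)"
proof -
  have 1: "((\<lambda>t. \<Sum>k\<in>{..<n} - {i}. b k t) has_real_derivative (\<Sum>k\<in>{..<n} - {i}. bd k t)) (at_right t)"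
    using assms by (intro DERIV_sum d_b) auto
  have 2: "((\<lambda>t. p t * S t) has_real_derivative pd t * S t + (- (\<Sum>k<n. xd k t)) * p t) (at_right t)"
    using assms by (intro DERIV_mult d_p d_S)
  show ?thesis unfolding G_def[abs_def] Gd_def using DERIV_diff[OF 1 2] by simp
qed

lemma cont_G: "0 \<le> u \<Longrightarrow> w \<le> c \<Longrightarrow> continuous_on {u..w} (G i)"
  unfolding G_def[abs_def] by (intro continuous_intros cont_b cont_p cont_S) auto

lemma C_G: assumes "p t > 0" "i \<in> C t" shows "G i t = 0"
proof -
  have "ereal (S t) = (\<Sum>k\<in>{..<n} - {i}. demand (b k t) (p t))"
    using assms unfolding clinching_set_def by auto
  also have "\<dots> = ereal (\<Sum>k\<in>{..<n} - {i}. b k t / p t)" using assms by (simp add: demand_pos)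
  finally have "S t = (\<Sum>k\<in>{..<n} - {i}. b k t) / p t" by (simp add: sum_divide_distrib)
  then show ?thesis using assms by (simp add: G_def field_simps)
qed

lemma Gd_np: assumes "0 \<le> t" "t < c" "p t > 0" "i < n" "i \<notin> C t" shows "Gd i t \<le> 0"
proof -
  have xi: "xd i t = 0" using xd_nz assms by blast
  have "(\<Sum>k<n. xd k t) = xd i t + (\<Sum>k\<in>{..<n} - {i}. xd k t)"
    using assms by (simp add: sum.remove)
  then have "Gd i t = (\<Sum>k\<in>{..<n} - {i}. bd k t + p t * xd k t) - pd t * S t"
    using xi by (simp add: Gd_def sum.distrib sum_distrib_left algebra_simps)
  also have "\<dots> \<le> 0 - 0"
  proof (rule diff_mono)
    show "(\<Sum>k\<in>{..<n} - {i}. bd k t + p t * xd k t) \<le> 0"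
      by (rule sum_nonpos) (use assms in \<open>auto simp: bd_def xd_def\<close>)
    show "0 \<le> pd t * S t" using S_nn[of t] assms by (auto simp: pd_def)
  qed
  finally show ?thesis by simp
qed

lemma G_le: assumes i: "i < n" and t: "0 \<le> t" "t \<le> c" and xt: "x i t > 0" shows "G i t \<le> 0"
proof -
  have cl: "closed {u\<in>{0..t}. x i u \<le> 0 \<or> G i u \<le> 0}"
  proof -
    have "{u\<in>{0..t}. x i u \<le> 0 \<or> G i u \<le> 0} = ({0..t} \<inter> x i -` {..0}) \<union> ({0..t} \<inter> G i -` {..0})" by auto
    moreover have "closed ({0..t} \<inter> x i -` {..0})" using cont_x[of i 0 t] i t by (intro continuous_closed_preimage) auto
    moreover have "closed ({0..t} \<inter> G i -` {..0})" using cont_G[of 0 t i] i t by (intro continuous_closed_preimage) auto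
    ultimately show ?thesis by auto
  qed
  obtain s where s: "0 \<le> s" "s \<le> t" "x i s \<le> 0 \<or> G i s \<le> 0"
    and after: "\<And>u. s < u \<Longrightarrow> u \<le> t \<Longrightarrow> \<not> (x i u \<le> 0 \<or> G i u \<le> 0)"
    using last_point[OF t(1) cl] init[OF i] by auto
  show ?thesis
  proof (cases "s = t")
    case True then show ?thesis using s xt by auto
  next
    case False
    then have st: "s < t" using s by simp
    have notC: "i \<notin> C u" "p u > 0" if "s < u" "u < t" for u
    proof -
      have "x i u > 0" "G i u > 0" using after[of u] that by auto
      then show "p u > 0" using x_pos_p[of i u] i that s t by auto
      then show "i \<notin> C u" using C_G[of u i] \<open>G i u > 0\<close> by auto
    qed
    have "x i t = x i s"
    proof (rule ml_const[OF _ cont_x])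
      fix u assume u: "s < u" "u < t"
      have "xd i u = 0" using xd_nz notC[OF u] by blast
      then show "(x i has_real_derivative 0) (at_right u)" using d_x[of u i] u s t i by auto
    qed (use s t i st in auto)
    then have Gs: "G i s \<le> 0" using s xt by auto
    have "G i t \<le> G i s"
    proof (rule ml_neg[OF _ cont_G])
      fix u assume u: "s < u" "u < t"
      then show "\<exists>d\<le>0. (G i has_real_derivative d) (at_right u)"
        using s t i notC[OF u] by (intro exI[of _ "Gd i u"]) (auto intro!: d_G Gd_np)
    qed (use s t st in auto)
    then show ?thesis using Gs by simp
  qed
qed

lemma sum_demand: "p t > 0 \<Longrightarrow> (\<Sum>k\<in>K. demand (b k t) (p t)) = ereal (\<Sum>k\<in>K. b k t / p t)"
  by (simp add: demand_pos)

lemma I4: assumes i: "i < n" and t: "0 \<le> t" "t < c" and xt: "x i t > 0" shows "i \<in> A t"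
proof (rule ccontr)
  assume nA: "i \<notin> A t"
  have pt: "p t > 0" using x_pos_p[of i t] i t xt by auto
  have G: "G i t \<le> 0" using G_le[of i t] i t xt by auto
  have "(\<Sum>k\<in>A t. b k t / p t) \<le> (\<Sum>k\<in>{..<n} - {i}. b k t / p t)"
  proof (rule sum_mono2)
    show "A t \<subseteq> {..<n} - {i}" using nA by (auto simp: active_set_def)
    fix k assume "k \<in> {..<n} - {i} - A t"
    then show "0 \<le> b k t / p t" using b_nn[of k t] pt t by simp
  qed simp
  also have "\<dots> = (\<Sum>k\<in>{..<n} - {i}. b k t) / p t" by (simp add: sum_divide_distrib)
  also have "\<dots> \<le> S t" using G pt by (simp add: G_def divide_le_eq mult.commute)
  finally have "stop_cond n v p b x t" unfolding stop_cond_def using sum_demand[OF pt] by simp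
  then show False using nostop[of t] t cf by auto
qed

lemma I2: assumes i: "i < n" and t: "0 \<le> t" "t \<le> c" and xt: "x i t > 0" shows "e i t = 0"
proof -
  have cl: "closed {u\<in>{0..t}. e i u \<le> 0}"
  proof -
    have "{u\<in>{0..t}. e i u \<le> 0} = {0..t} \<inter> e i -` {..0}" by auto
    moreover have "closed ({0..t} \<inter> e i -` {..0})" using cont_e[of i 0 t] i t by (intro continuous_closed_preimage) auto
    ultimately show ?thesis by auto
  qed
  obtain s where s: "0 \<le> s" "s \<le> t" "e i s \<le> 0"
    and after: "\<And>u. s < u \<Longrightarrow> u \<le> t \<Longrightarrow> \<not> e i u \<le> 0"
    using last_point[OF t(1) cl] init[OF i] by (auto simp: e_def)
  have "e i t \<le> 0"
  proof (cases "s = t")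
    case True then show ?thesis using s by auto
  next
    case False
    then have st: "s < t" using s by simp
    have nA: "i \<notin> A u" if "s < u" "u \<le> t" for u
    proof -
      have "e i u > 0" using after[of u] that by auto
      then have "v i \<le> p u" using e_v[of i u] i that s t by auto
      then show ?thesis by (auto simp: active_set_def)
    qed
    have xc: "x i t = x i u" if "s \<le> u" "u \<le> t" for u
    proof (rule ml_const[OF _ cont_x])
      fix w assume w: "u < w" "w < t"
      have "s < w" "w \<le> t" using w that by linarith+
      then have "i \<notin> A w" by (rule nA)
      then have "i \<notin> C w" using C_A[of w] by blast
      then have "xd i w = 0" using xd_nz by blast
      then show "(x i has_real_derivative 0) (at_right w)" using d_x[of w i] w that s t i by auto
    qed (use s t i that in auto)
    have "e i t = e i s"
    proof (rule ml_const[OF _ cont_e])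
      fix u assume u: "s < u" "u < t"
      have "x i u > 0" using xc[of u] u xt by auto
      moreover have "0 \<le> u" "u < c" using u s t by linarith+
      ultimately have "i \<in> A u" using I4[of i u] i by blast
      moreover have "i \<notin> A u" using nA[of u] u by linarith
      ultimately have False by blast
      then have "i \<notin> E u" by blast
      then have "\<not> (E u \<noteq> {} \<and> i = Min (E u))" using Min_E[of u] by auto
      then have "- (Pd i u + bd i u) = 0" using ed_cases[of i u] by simp
      then show "(e i has_real_derivative 0) (at_right u)" using d_e[of u i] u s t i by auto
    qed (use s t i st in auto)
    then show ?thesis using s by simp
  qed
  then show ?thesis using e_nn[of i t] i t by auto
qed

end


locale frun = crun n v B p b x P f f for n v B p b x P f +
  assumes fpos: "0 < f"
begin

lemma lim_left: assumes "continuous_on {0..f} g" shows "(g \<longlongrightarrow> g f) (at_left f)"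
proof -
  have "(g \<longlongrightarrow> g f) (at f within {0..f})" using assms f0 unfolding continuous_on_def by auto
  then show ?thesis using at_within_Icc_at_left[OF fpos] by simp
qed

lemma ev_in: "eventually (\<lambda>u. 0 \<le> u \<and> u < f) (at_left f)"
  using fpos unfolding eventually_at_left_field by (intro exI[of _ 0]) auto

lemma ev_pos: fixes g :: "real \<Rightarrow> real" assumes "continuous_on {0..f} g" "a < g f" shows "eventually (\<lambda>u. a < g u) (at_left f)"
  using order_tendstoD(1)[OF lim_left[OF assms(1)] assms(2)] .

lemma x_cont: "i < n \<Longrightarrow> continuous_on {0..f} (x i)" using cont_x[of i 0 f] f0 by auto
lemma b_cont: "i < n \<Longrightarrow> continuous_on {0..f} (b i)" using cont_b[of i 0 f] f0 by auto
lemma e_cont: "i < n \<Longrightarrow> continuous_on {0..f} (e i)" using cont_e[of i 0 f] f0 by auto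
lemma p_cont: "continuous_on {0..f} p" using cont_p[of 0 f] f0 by auto

lemma demand0: "demand bb 0 = \<infinity> \<or> demand bb 0 = 0" by (auto simp: demand_def)

lemma pf_pos: "p f > 0"
proof (rule ccontr)
  assume "\<not> p f > 0"
  then have pf0: "p f \<le> 0" by simp
  have pz: "p u = 0" if "0 \<le> u" "u \<le> f" for u
  proof -
    have "p u \<le> p f" using p_mono[of u f] that by simp
    moreover have "0 \<le> p u" using p_nn[of u] that by simp
    ultimately show ?thesis using pf0 by simp
  qed
  have xz: "x k u = 0" if "k < n" "0 \<le> u" "u \<le> f" for k u
  proof -
    have "0 \<le> x k u" using x_nn[of k u] that by simp
    moreover have "\<not> x k u > 0" using x_pos_p[of k u] pz[of u] that by auto
    ultimately show ?thesis by simp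
  qed
  show False
  proof (cases "\<exists>i<n. v i > 0")
    case True
    then obtain i where i: "i < n" "v i > 0" by blast
    have "b i f = b i 0"
    proof (rule ml_const[OF _ cont_b])
      fix u assume u: "0 < u" "u < f"
      have pu: "p u = 0" using pz[of u] u by auto
      have nE: "i \<notin> E u" using i pu by (auto simp: exiting_set_def)
      have Su: "S u = 1" using xz u by (simp add: remaining_supply_def)
      have nC: "i \<notin> C u"
      proof
        assume "i \<in> C u"
        then have eq: "ereal (S u) = (\<Sum>k\<in>{..<n} - {i}. demand (b k u) 0)"
          using pu unfolding clinching_set_def by auto
        show False
        proof (cases "\<exists>k\<in>{..<n} - {i}. demand (b k u) 0 = \<infinity>")
          case True
          then have "(\<Sum>k\<in>{..<n} - {i}. demand (b k u) 0) = \<infinity>" by (simp add: sum_Pinfty)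
          then show False using eq by simp
        next
          case False
          then have "(\<Sum>k\<in>{..<n} - {i}. demand (b k u) 0) = 0" using demand0 by (intro sum.neutral) blast
          then show False using eq Su by simp
        qed
      qed
      have "bd i u = 0" using nE nC Min_E[of u] unfolding bd_def by auto
      then show "(b i has_real_derivative 0) (at_right u)" using d_b[of u i] u i by auto
    qed (use i f0 in auto)
    then have bf: "b i f = B i" using init[OF i(1)] by simp
    have pf: "p f = 0" using pz[of f] f0 by simp
    have bpos: "b i f > 0" using bf Bpos[OF i(1)] by simp
    have iA: "i \<in> A f" using i bpos pf unfolding active_set_def by simp
    have "demand (b i f) (p f) = \<infinity>" using bpos pf by (simp add: demand_def)
    moreover have "finite (A f)" by (simp add: active_set_def)
    ultimately have "(\<Sum>k\<in>A f. demand (b k f) (p f)) = \<infinity>" using iA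
      unfolding sum_Pinfty by blast
    then show False using stopf unfolding stop_cond_def by simp
  next
    case False
    then have "A 0 = {}" using p0 by (auto simp: active_set_def)
    then show False using Ane[of 0] fpos by auto
  qed
qed

definition "W = {k. k < n \<and> p f \<le> v k}"

lemma feas0: "S f \<le> (\<Sum>k\<in>W. b k f / p f)"
proof -
  have pf: "p f > 0" by (rule pf_pos)
  have ev1: "eventually (\<lambda>u. \<forall>k\<in>{k. k < n \<and> v k < p f}. v k < p u) (at_left f)"
    by (rule eventually_ball_finite) (auto intro: ev_pos[OF p_cont])
  have ev2: "eventually (\<lambda>u. 0 < p u) (at_left f)" using ev_pos[OF p_cont] pf by blast
  have "eventually (\<lambda>u. S u \<le> (\<Sum>k\<in>W. b k u / p u)) (at_left f)"
    using ev1 ev2 ev_in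
  proof eventually_elim
    case (elim u)
    then have pu: "p u > 0" and u: "0 \<le> u" "u < f" by auto
    have "\<not> stop_cond n v p b x u" using nostop u by auto
    then have "S u < (\<Sum>k\<in>A u. b k u / p u)" unfolding stop_cond_def sum_demand[OF pu] by simp
    also have "\<dots> \<le> (\<Sum>k\<in>W. b k u / p u)"
    proof (rule sum_mono2)
      show "finite W" by (simp add: W_def)
      show "A u \<subseteq> W"
      proof
        fix k assume k: "k \<in> A u"
        then have "k < n" "v k > p u" by (auto simp: active_set_def)
        then show "k \<in> W" using elim by (auto simp: W_def not_less[symmetric])
      qed
      fix k assume "k \<in> W - A u"
      then show "0 \<le> b k u / p u" using b_nn[of k u] pu u by (simp add: W_def)
    qed
    finally show ?case by simp
  qed
  moreover have "((\<lambda>u. S u) \<longlongrightarrow> S f) (at_left f)" using lim_left cont_S[of 0 f] f0 by auto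
  moreover have "((\<lambda>u. \<Sum>k\<in>W. b k u / p u) \<longlongrightarrow> (\<Sum>k\<in>W. b k f / p f)) (at_left f)"
    using pf by (intro tendsto_intros lim_left b_cont p_cont) (auto simp: W_def)
  ultimately show ?thesis by (intro tendsto_le[OF trivial_limit_at_left_real]) 
qed

lemma AE_W: "A f \<union> E f \<subseteq> W" "A f \<inter> E f = {}"
  by (auto simp: W_def active_set_def exiting_set_def)

lemma feas: "S f \<le> (\<Sum>k\<in>A f. b k f / p f) + (\<Sum>k\<in>E f. b k f / p f)"
proof -
  have "(\<Sum>k\<in>W. b k f / p f) = (\<Sum>k\<in>A f \<union> E f. b k f / p f)"
  proof (rule sum.mono_neutral_right)
    show "finite W" by (simp add: W_def)
    show "A f \<union> E f \<subseteq> W" by (rule AE_W)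
    show "\<forall>i\<in>W - (A f \<union> E f). b i f / p f = 0"
    proof
      fix i assume i: "i \<in> W - (A f \<union> E f)"
      then have "i < n" "p f \<le> v i" by (auto simp: W_def)
      then have "b i f \<le> 0" using i by (auto simp: active_set_def exiting_set_def)
      moreover have "0 \<le> b i f" using b_nn[of i f] \<open>i < n\<close> f0 by simp
      ultimately show "b i f / p f = 0" by simp
    qed
  qed
  also have "\<dots> = (\<Sum>k\<in>A f. b k f / p f) + (\<Sum>k\<in>E f. b k f / p f)"
    using AE_W(2) by (intro sum.union_disjoint) (auto simp: active_set_def E_fin)
  finally show ?thesis using feas0 by simp
qed

lemma SA: "(\<Sum>k\<in>A f. b k f / p f) \<le> S f"
  using stopf unfolding stop_cond_def sum_demand[OF pf_pos] by simp

lemma A_pay: assumes "i \<in> A f" shows "final_pay n v p b P f r i = B i"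
proof -
  have i: "i < n" "v i > p f" using assms by (auto simp: active_set_def)
  have "e i f = 0"
  proof (rule ccontr)
    assume "e i f \<noteq> 0"
    then have "e i f > 0" using e_nn[of i f] i f0 by simp
    then show False using e_v[of i f] i f0 by simp
  qed
  then show ?thesis using assms pf_pos by (simp add: final_pay_def e_def)
qed

lemma out_notbad: assumes i: "i < n" "i \<notin> A f" "i \<notin> E f" and xi: "x i f > 0"
  shows "B i \<le> P i f"
proof (rule ccontr)
  assume "\<not> B i \<le> P i f"
  have "e i f = 0" using I2[of i f] i xi f0 by simp
  then have bpos: "b i f > 0" using \<open>\<not> B i \<le> P i f\<close> by (simp add: e_def)
  then have vi: "v i < p f" using i by (auto simp: active_set_def exiting_set_def)
  have "eventually (\<lambda>u. 0 < x i u \<and> v i < p u \<and> 0 \<le> u \<and> u < f) (at_left f)"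
    using ev_pos[OF x_cont[OF i(1)] xi] ev_pos[OF p_cont vi] ev_in by eventually_elim auto
  then obtain u where u: "0 < x i u" "v i < p u" "0 \<le> u" "u < f" using ev_left_ex by blast
  then have "i \<in> A u" using I4[of i u] i by auto
  then show False using u by (auto simp: active_set_def)
qed

lemma Ee_unique: assumes j: "j \<in> E f" "e j f > 0" and k: "k \<in> E f" "e k f > 0" shows "j \<le> k"
proof -
  have jn: "j < n" using j by (auto simp: exiting_set_def)
  have "\<exists>u. 0 < u \<and> u < f \<and> E u \<noteq> {} \<and> j = Min (E u)"
  proof (rule ccontr)
    assume nu: "\<not> ?thesis"
    have "e j f = e j 0"
    proof (rule ml_const[OF _ cont_e])
      fix u assume u: "0 < u" "u < f"
      then have "- (Pd j u + bd j u) = 0" using ed_cases[of j u] nu by auto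
      then show "(e j has_real_derivative 0) (at_right u)" using d_e[of u j] u jn by auto
    qed (use jn f0 in auto)
    then show False using j init[OF jn] by (simp add: e_def)
  qed
  then obtain u where u: "0 < u" "u < f" "E u \<noteq> {}" "j = Min (E u)" by blast
  have "j \<in> E u" using Min_E[OF u(3)] u(4) by simp
  then have vj: "v j = p u" by (auto simp: exiting_set_def)
  have kn: "k < n" "v k = p f" "b k f > 0" using k by (auto simp: exiting_set_def)
  have "v j = p f" using j by (auto simp: exiting_set_def)
  have "b k f \<le> b k u" using b_mono[of k u f] kn u by simp
  then have "k \<in> E u" using kn vj \<open>v j = p f\<close> by (auto simp: exiting_set_def)
  then show ?thesis using u(4) Min_le[OF E_fin] by simp
qed

lemma E_clinch: assumes i: "i \<in> E f" "x i f > 0" and j: "j \<in> E f" shows "e j f = 0"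
proof (rule ccontr)
  assume "e j f \<noteq> 0"
  have jn: "j < n" using j by (auto simp: exiting_set_def)
  have iN: "i < n" using i by (auto simp: exiting_set_def)
  then have ej: "e j f > 0" using e_nn[of j f] jn f0 \<open>e j f \<noteq> 0\<close> by simp
  have "eventually (\<lambda>u. 0 < x i u \<and> 0 < e j u \<and> 0 \<le> u \<and> u < f) (at_left f)"
    using ev_pos[OF x_cont[OF iN] i(2)] ev_pos[OF e_cont[OF jn] ej] ev_in by eventually_elim auto
  then obtain u where u: "0 < x i u" "0 < e j u" "0 \<le> u" "u < f" using ev_left_ex by blast
  then have "i \<in> A u" using I4[of i u] iN by auto
  then have "v i > p u" by (auto simp: active_set_def)
  moreover have "v j \<le> p u" using e_v[of j u] u jn by simp
  moreover have "v i = v j" using i j by (auto simp: exiting_set_def)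
  ultimately show False by simp
qed

lemma finish:
  assumes r0: "\<forall>j. 0 \<le> r j" and r1: "\<forall>j. j \<notin> E f \<longrightarrow> r j = 0"
    and r2: "\<forall>j\<in>E f. r j \<le> b j f / p f"
    and r3: "(\<Sum>j\<in>E f. r j) = S f - (\<Sum>i\<in>A f. b i f / p f)"
    and T: "finite T" "card T \<le> 1"
    and bad: "\<And>i. i \<in> E f \<Longrightarrow> 0 < x i f + r i \<Longrightarrow> p f * r i < e i f + b i f \<Longrightarrow> i \<in> T"
  shows "\<exists>r :: nat \<Rightarrow> real.
           (\<forall>j. r j \<ge> 0) \<and>
           (\<forall>j. j \<notin> exiting_set n v p b f \<longrightarrow> r j = 0) \<and>
           (\<forall>j\<in>exiting_set n v p b f. p f * r j \<le> b j f) \<and>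
           (\<Sum>j\<in>exiting_set n v p b f. r j)
              = remaining_supply n x f - (\<Sum>i\<in>active_set n v p b f. b i f / p f) \<and>
           card {i. i < n \<and> final_alloc n v p b x f r i > 0
                          \<and> final_pay n v p b P f r i < B i} \<le> 1"
proof (intro exI[of _ r] conjI)
  have pf: "p f > 0" by (rule pf_pos)
  show "\<forall>j. r j \<ge> 0" using r0 by blast
  show "\<forall>j. j \<notin> E f \<longrightarrow> r j = 0" using r1 by blast
  show "\<forall>j\<in>E f. p f * r j \<le> b j f"
  proof
    fix j assume "j \<in> E f"
    then have "r j \<le> b j f / p f" using r2 by blast
    then show "p f * r j \<le> b j f" using pf by (simp add: le_divide_eq mult.commute)
  qed
  show "(\<Sum>j\<in>E f. r j) = S f - (\<Sum>i\<in>A f. b i f / p f)" by (rule r3)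
  have "{i. i < n \<and> final_alloc n v p b x f r i > 0 \<and> final_pay n v p b P f r i < B i} \<subseteq> T"
  proof
    fix i assume "i \<in> {i. i < n \<and> final_alloc n v p b x f r i > 0 \<and> final_pay n v p b P f r i < B i}"
    then have i: "i < n" "final_alloc n v p b x f r i > 0" "final_pay n v p b P f r i < B i" by auto
    have nA: "i \<notin> A f" using A_pay[of i r] i by auto
    show "i \<in> T"
    proof (cases "i \<in> E f")
      case True
      have "0 < x i f + r i" using i(2) nA by (simp add: final_alloc_def)
      moreover have "p f * r i < e i f + b i f" using i(3) nA by (simp add: final_pay_def e_def)
      ultimately show ?thesis using bad True by blast
    next
      case False
      then have "r i = 0" using r1 by blast
      then have "x i f > 0" "P i f < B i" using i nA by (auto simp: final_alloc_def final_pay_def)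
      then show ?thesis using out_notbad[of i] i(1) nA False by simp
    qed
  qed
  then show "card {i. i < n \<and> final_alloc n v p b x f r i > 0 \<and> final_pay n v p b P f r i < B i} \<le> 1"
    using T card_mono order_trans by blast
qed

lemma cc_nn: "k < n \<Longrightarrow> 0 \<le> b k f / p f" using b_nn[of k f] pf_pos f0 by simp

lemma En: "j \<in> E f \<Longrightarrow> j < n" by (auto simp: exiting_set_def)

lemma main:
  shows "\<exists>r :: nat \<Rightarrow> real.
           (\<forall>j. r j \<ge> 0) \<and>
           (\<forall>j. j \<notin> exiting_set n v p b f \<longrightarrow> r j = 0) \<and>
           (\<forall>j\<in>exiting_set n v p b f. p f * r j \<le> b j f) \<and>
           (\<Sum>j\<in>exiting_set n v p b f. r j)
              = remaining_supply n x f - (\<Sum>i\<in>active_set n v p b f. b i f / p f) \<and>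
           card {i. i < n \<and> final_alloc n v p b x f r i > 0
                          \<and> final_pay n v p b P f r i < B i} \<le> 1"
proof -
  have pf: "p f > 0" by (rule pf_pos)
  define cc where "cc k = b k f / p f" for k
  define R where "R = S f - (\<Sum>k\<in>A f. cc k)"
  have R0: "0 \<le> R" using SA by (simp add: R_def cc_def)
  have R1: "R \<le> (\<Sum>k\<in>E f. cc k)" using feas by (simp add: R_def cc_def)
  have ccp: "\<And>k. k \<in> E f \<Longrightarrow> p f * cc k = b k f" using pf by (simp add: cc_def)
  have ccn: "\<And>k. k \<in> E f \<Longrightarrow> 0 \<le> cc k" using cc_nn En by (simp add: cc_def)
  show ?thesis
  proof (cases "\<exists>i0\<in>E f. x i0 f > 0")
    case True
    then obtain i0 where i0: "i0 \<in> E f" "x i0 f > 0" by blast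
    have i0n: "i0 < n" using En[OF i0(1)] .
    have G: "G i0 f \<le> 0" using G_le[of i0 f] i0n i0 f0 by simp
    have "(\<Sum>k\<in>A f. cc k) + (\<Sum>k\<in>E f - {i0}. cc k) = (\<Sum>k\<in>A f \<union> (E f - {i0}). cc k)"
      using AE_W(2) by (intro sum.union_disjoint[symmetric]) (auto simp: active_set_def E_fin)
    also have "\<dots> \<le> (\<Sum>k\<in>{..<n} - {i0}. cc k)"
    proof (rule sum_mono2)
      show "A f \<union> (E f - {i0}) \<subseteq> {..<n} - {i0}"
        using i0 by (auto simp: active_set_def exiting_set_def)
      fix k assume "k \<in> {..<n} - {i0} - (A f \<union> (E f - {i0}))"
      then show "0 \<le> cc k" using cc_nn[of k] by (simp add: cc_def)
    qed simp
    also have "\<dots> = (\<Sum>k\<in>{..<n} - {i0}. b k f) / p f" by (simp add: cc_def sum_divide_distrib)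
    also have "\<dots> \<le> S f" using G pf by (simp add: G_def divide_le_eq mult.commute)
    finally have sumX: "(\<Sum>k\<in>E f - {i0}. cc k) \<le> R" by (simp add: R_def)
    have rem: "(\<Sum>k\<in>E f. cc k) = cc i0 + (\<Sum>k\<in>E f - {i0}. cc k)"
      using i0 E_fin by (simp add: sum.remove)
    define r where "r j = (if j \<in> E f - {i0} then cc j else if j = i0 then R - (\<Sum>k\<in>E f - {i0}. cc k) else 0)" for j
    have rsum: "(\<Sum>j\<in>E f - {i0}. r j) = (\<Sum>k\<in>E f - {i0}. cc k)"
      by (rule sum.cong) (auto simp: r_def)
    show ?thesis
    proof (rule finish[of r "{i0}"])
      show "\<forall>j. 0 \<le> r j" using sumX ccn by (auto simp: r_def)
      show "\<forall>j. j \<notin> E f \<longrightarrow> r j = 0" using i0 by (auto simp: r_def)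
      show "\<forall>j\<in>E f. r j \<le> b j f / p f" using R1 rem by (auto simp: r_def cc_def)
      have "(\<Sum>j\<in>E f. r j) = r i0 + (\<Sum>j\<in>E f - {i0}. r j)"
        using i0 E_fin by (simp add: sum.remove)
      also have "\<dots> = R" using rsum by (simp add: r_def)
      finally show "(\<Sum>j\<in>E f. r j) = S f - (\<Sum>i\<in>A f. b i f / p f)" by (simp add: R_def cc_def)
      fix i assume i: "i \<in> E f" "0 < x i f + r i" "p f * r i < e i f + b i f"
      show "i \<in> {i0}"
      proof (rule ccontr)
        assume "i \<notin> {i0}"
        then have "r i = cc i" using i by (simp add: r_def)
        then have "p f * r i = b i f" using ccp[OF i(1)] by simp
        moreover have "e i f = 0" using E_clinch[OF i0 i(1)] .
        ultimately show False using i(3) by simp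
      qed
    qed auto
  next
    case False
    then have xle: "\<And>i. i \<in> E f \<Longrightarrow> x i f \<le> 0" by auto
    define Z0 where "Z0 = {j \<in> E f. e j f > 0}"
    have Z0u: "\<And>j k. j \<in> Z0 \<Longrightarrow> k \<in> Z0 \<Longrightarrow> j = k"
      using Ee_unique by (auto simp: Z0_def intro: antisym)
    have Z0s: "Z0 \<subseteq> E f" by (auto simp: Z0_def)
    have e0: "\<And>i. i \<in> E f \<Longrightarrow> i \<notin> Z0 \<Longrightarrow> e i f = 0"
      using e_nn En f0 by (force simp: Z0_def)
    define E' where "E' = E f - Z0"
    have finE': "finite E'" using E_fin by (simp add: E'_def)
    show ?thesis
    proof (cases "R \<le> (\<Sum>k\<in>E'. cc k)")
      case True
      obtain r where r: "(\<forall>j. 0 \<le> r j) \<and> (\<forall>j. j \<notin> E' \<longrightarrow> r j = 0) \<and> (\<forall>j\<in>E'. r j \<le> cc j) \<and> sum r E' = R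
           \<and> (\<forall>j\<in>E'. \<forall>k\<in>E'. 0 < r j \<and> r j < cc j \<and> 0 < r k \<and> r k < cc k \<longrightarrow> j = k)"
        using greedy0[OF finE' _ R0 True] ccn by (auto simp: E'_def)
      let ?T = "{j\<in>E'. 0 < r j \<and> r j < cc j}"
      show ?thesis
      proof (rule finish[of r ?T])
        show "\<forall>j. 0 \<le> r j" using r by blast
        show "\<forall>j. j \<notin> E f \<longrightarrow> r j = 0" using r by (auto simp: E'_def)
        show "\<forall>j\<in>E f. r j \<le> b j f / p f" using r ccn by (auto simp: E'_def cc_def)
        have "(\<Sum>j\<in>E f. r j) = (\<Sum>j\<in>E'. r j)"
          using r E_fin by (intro sum.mono_neutral_right) (auto simp: E'_def)
        then show "(\<Sum>j\<in>E f. r j) = S f - (\<Sum>i\<in>A f. b i f / p f)" using r by (simp add: R_def cc_def)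
        show "finite ?T" using finE' by simp
        have "\<forall>a\<in>?T. \<forall>c\<in>?T. a = c" using r by blast
        then have "card ?T \<le> Suc 0" using card_le_Suc0_iff_eq[of ?T] finE' by simp
        then show "card ?T \<le> 1" by simp
        fix i assume i: "i \<in> E f" "0 < x i f + r i" "p f * r i < e i f + b i f"
        have ri: "0 < r i" using i(2) xle[OF i(1)] by simp
        then have iE': "i \<in> E'" using r by (metis less_irrefl)
        then have "e i f = 0" using e0 by (auto simp: E'_def)
        then have "p f * r i < p f * cc i" using i(3) ccp[OF i(1)] by simp
        then have "r i < cc i" using pf by simp
        then show "i \<in> ?T" using ri iE' by simp
      qed
    next
      case False
      have sE: "(\<Sum>k\<in>E f. cc k) = (\<Sum>k\<in>E'. cc k) + (\<Sum>k\<in>Z0. cc k)"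
        using E_fin Z0s by (simp add: E'_def sum.subset_diff)
      have "Z0 \<noteq> {}" using False R1 sE by auto
      then obtain j0 where "j0 \<in> Z0" by blast
      then have Z0eq: "Z0 = {j0}" using Z0u by blast
      have j0E: "j0 \<in> E f" using Z0s Z0eq by auto
      define r where "r j = (if j \<in> E' then cc j else if j = j0 then R - (\<Sum>k\<in>E'. cc k) else 0)" for j
      have j0E': "j0 \<notin> E'" using Z0eq by (simp add: E'_def)
      have Ef: "E f = insert j0 E'" using Z0eq j0E by (auto simp: E'_def)
      show ?thesis
      proof (rule finish[of r "{j0}"])
        show "\<forall>j. 0 \<le> r j" using False ccn by (auto simp: r_def E'_def)
        show "\<forall>j. j \<notin> E f \<longrightarrow> r j = 0" using Ef by (auto simp: r_def)
        show "\<forall>j\<in>E f. r j \<le> b j f / p f" using R1 sE Z0eq j0E' by (auto simp: r_def cc_def Ef)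
        have "(\<Sum>j\<in>E f. r j) = r j0 + (\<Sum>j\<in>E'. r j)" using Ef j0E' finE' by simp
        also have "(\<Sum>j\<in>E'. r j) = (\<Sum>j\<in>E'. cc j)" by (rule sum.cong) (auto simp: r_def)
        finally show "(\<Sum>j\<in>E f. r j) = S f - (\<Sum>i\<in>A f. b i f / p f)"
          using j0E' by (simp add: r_def R_def cc_def)
        fix i assume i: "i \<in> E f" "0 < x i f + r i" "p f * r i < e i f + b i f"
        show "i \<in> {j0}"
        proof (rule ccontr)
          assume "i \<notin> {j0}"
          then have iE': "i \<in> E'" using i Ef by auto
          then have "r i = cc i" by (simp add: r_def)
          then have "p f * r i = b i f" using ccp[OF i(1)] by simp
          moreover have "e i f = 0" using e0 iE' by (auto simp: E'_def)
          ultimately show False using i(3) by simp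
        qed
      qed auto
    qed
  qed
qed

end

theorem lemma5:
  fixes n :: nat and v B :: "nat \<Rightarrow> real" and p :: "real \<Rightarrow> real"
    and b x P :: "nat \<Rightarrow> real \<Rightarrow> real" and f :: real
  assumes "n \<ge> 1"
    and "\<And>i. i < n \<Longrightarrow> v i \<ge> 0"
    and "\<And>i. i < n \<Longrightarrow> B i > 0"
    and "clinching_run n v B p b x P f"
  shows "\<exists>r :: nat \<Rightarrow> real.
           (\<forall>j. r j \<ge> 0) \<and>
           (\<forall>j. j \<notin> exiting_set n v p b f \<longrightarrow> r j = 0) \<and>
           (\<forall>j\<in>exiting_set n v p b f. p f * r j \<le> b j f) \<and>
           (\<Sum>j\<in>exiting_set n v p b f. r j)
              = remaining_supply n x f - (\<Sum>i\<in>active_set n v p b f. b i f / p f) \<and>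
           card {i. i < n \<and> final_alloc n v p b x f r i > 0
                          \<and> final_pay n v p b P f r i < B i} \<le> 1"
proof -
  note run = assms(4)
  have f0: "0 \<le> f" and p0: "p 0 = 0" and init: "\<And>i. i < n \<Longrightarrow> x i 0 = 0 \<and> P i 0 = 0 \<and> b i 0 = B i"
    and contp: "continuous_on {0..f} p"
    and contb: "\<And>i. i < n \<Longrightarrow> continuous_on {0..f} (b i)"
    and nostop: "\<And>t. 0 \<le> t \<Longrightarrow> t < f \<Longrightarrow> \<not> stop_cond n v p b x t"
    and stopf: "stop_cond n v p b x f"
    using run unfolding clinching_run_def by auto
  show ?thesis
  proof (cases "f = 0")
    case True
    have A0: "active_set n v p b 0 = {}"
    proof (rule ccontr)
      assume "active_set n v p b 0 \<noteq> {}"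
      then obtain j where j: "j \<in> active_set n v p b 0" by blast
      then have "b j 0 > 0" by (auto simp: active_set_def)
      then have "demand (b j 0) (p 0) = \<infinity>" using p0 by (simp add: demand_def)
      moreover have "finite (active_set n v p b 0)" by (simp add: active_set_def)
      ultimately have "(\<Sum>k\<in>active_set n v p b 0. demand (b k 0) (p 0)) = \<infinity>"
        using j unfolding sum_Pinfty by blast
      then show False using stopf True unfolding stop_cond_def by simp
    qed
    have E0: "exiting_set n v p b 0 = {..<n}"
    proof (intro set_eqI iffI)
      fix j assume "j \<in> {..<n}"
      then have j: "j < n" by simp
      then have bj: "b j 0 > 0" using init[OF j] assms(3)[OF j] by simp
      then have "\<not> v j > 0" using A0 p0 j by (auto simp: active_set_def)
      then have "v j = 0" using assms(2)[OF j] by simp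
      then show "j \<in> exiting_set n v p b 0" using j bj p0 by (simp add: exiting_set_def)
    qed (auto simp: exiting_set_def)
    have S0: "remaining_supply n x 0 = 1" using init by (simp add: remaining_supply_def)
    define r :: "nat \<Rightarrow> real" where "r j = (if j = 0 then 1 else 0)" for j
    have n0: "0 \<in> {..<n}" using assms(1) by simp
    have "{i. i < n \<and> final_alloc n v p b x 0 r i > 0 \<and> final_pay n v p b P 0 r i < B i} \<subseteq> {0}"
      using A0 init by (auto simp: final_alloc_def r_def split: if_splits)
    then have "card {i. i < n \<and> final_alloc n v p b x 0 r i > 0 \<and> final_pay n v p b P 0 r i < B i} \<le> 1"
      using card_mono[of "{0::nat}"] by fastforce
    moreover have "(\<Sum>j\<in>{..<n}. r j) = 1" using n0 by (simp add: r_def)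
    ultimately show ?thesis using True A0 E0 S0 init assms(3) n0 p0
      by (intro exI[of _ r]) (auto simp: r_def less_imp_le)
  next
    case False
    then have fpos: "0 < f" using f0 by simp
    have Ane: "\<And>t. 0 \<le> t \<Longrightarrow> t < f \<Longrightarrow> active_set n v p b t \<noteq> {}"
    proof (rule ccontr)
      fix t1 assume t1: "0 \<le> t1" "t1 < f" and "\<not> active_set n v p b t1 \<noteq> {}"
      then have At1: "active_set n v p b t1 = {}" by simp
      define Z where "Z = {t\<in>{0..f}. active_set n v p b t = {}}"
      have Zeq: "Z = {0..f} \<inter> (\<Inter>j\<in>{..<n}. ({0..f} \<inter> p -` {v j..}) \<union> ({0..f} \<inter> b j -` {..0}))"
        by (auto simp: Z_def active_set_def not_less) (meson not_le)
      have "closed Z" unfolding Zeq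
        using contp contb
        by (intro closed_Int closed_INT closed_Un ballI continuous_closed_preimage) auto
      moreover have "t1 \<in> Z" using t1 At1 by (simp add: Z_def)
      moreover have bb: "bdd_below Z" by (rule bdd_belowI[of _ 0]) (auto simp: Z_def)
      ultimately have t0Z: "Inf Z \<in> Z" and t0le: "Inf Z \<le> t1"
        using closed_contains_Inf[of Z] cInf_lower[OF _ bb] by auto
      define t0 where "t0 = Inf Z"
      have t0: "0 \<le> t0" "t0 < f" "active_set n v p b t0 = {}"
        using t0Z t0le t1 by (auto simp: Z_def t0_def)
      interpret c: crun n v B p b x P f t0
      proof
        show "\<And>i. i < n \<Longrightarrow> 0 \<le> v i" using assms(2) .
        show "\<And>i. i < n \<Longrightarrow> 0 < B i" using assms(3) .
        show "clinching_run n v B p b x P f" using run .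
        show "t0 \<le> f" "0 \<le> t0" using t0 by auto
        fix t assume t: "0 \<le> t" "t < t0"
        show "active_set n v p b t \<noteq> {}"
        proof
          assume "active_set n v p b t = {}"
          then have "t \<in> Z" using t t0 by (simp add: Z_def)
          then have "t0 \<le> t" using cInf_lower[OF _ bb] by (simp add: t0_def)
          then show False using t by simp
        qed
      qed
      have "0 \<le> remaining_supply n x t0" using c.S_nn[of t0] t0 by simp
      then have "stop_cond n v p b x t0" using t0 by (simp add: stop_cond_def)
      then show False using nostop[of t0] t0 by simp
    qed
    interpret fr: frun n v B p b x P f
    proof
      show "\<And>i. i < n \<Longrightarrow> 0 \<le> v i" using assms(2) .
      show "\<And>i. i < n \<Longrightarrow> 0 < B i" using assms(3) .
      show "clinching_run n v B p b x P f" using run .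
      show "f \<le> f" "0 \<le> f" using f0 by auto
      show "\<And>t. 0 \<le> t \<Longrightarrow> t < f \<Longrightarrow> active_set n v p b t \<noteq> {}" using Ane .
      show "0 < f" using fpos .
    qed
    show ?thesis by (rule fr.main)
  qed
qed


end
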